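(* Let $G$ be the line graph of a bipartite graph. Then $p(G)\le 2$.
   Context: The line graph of a graph $H$ has the edges of $H$ as vertices, two being adjacent iff the corresponding edges of $H$ share a vertex. A comparability graph is a graph admitting a transitive orientation. $p(G)$ is the minimum number $m$ such that $E(G)$ is the union of the edge sets of $m$ pairwise edge-disjoint comparability subgraphs of $G$. *)

theory Defs
  imports Main
begin

definition simple_graph :: "'v set \<Rightarrow> 'v set set \<Rightarrow> bool" where
  "simple_graph V E \<longleftrightarrow> (\<forall>e\<in>E. \<exists>u v. u \<in> V \<and> v \<in> V \<and> u \<noteq> v \<and> e = {u, v})"

definition finite_simple_graph :: "'v set \<Rightarrow> 'v set set \<Rightarrow> bool" where
  "finite_simple_graph V E \<longleftrightarrow> finite V \<and> simple_graph V E"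

definition bipartite :: "'v set \<Rightarrow> 'v set set \<Rightarrow> bool" where
  "bipartite V E \<longleftrightarrow> (\<exists>A B. A \<inter> B = {} \<and> A \<union> B = V \<and>
      (\<forall>e\<in>E. \<exists>a b. a \<in> A \<and> b \<in> B \<and> e = {a, b}))"

definition line_graph_edges :: "'v set set \<Rightarrow> 'v set set set" where
  "line_graph_edges E = {{e, f} | e f. e \<in> E \<and> f \<in> E \<and> e \<noteq> f \<and> e \<inter> f \<noteq> {}}"

definition transitive_orientation :: "'v set set \<Rightarrow> ('v \<times> 'v) set \<Rightarrow> bool" where
  "transitive_orientation E R \<longleftrightarrow>
     (\<forall>u v. (u, v) \<in> R \<longrightarrow> {u, v} \<in> E) \<and>
     (\<forall>u v. u \<noteq> v \<longrightarrow> {u, v} \<in> E \<longrightarrow> ((u, v) \<in> R \<longleftrightarrow> (v, u) \<notin> R)) \<and>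
     trans R"

definition comparability_graph :: "'v set \<Rightarrow> 'v set set \<Rightarrow> bool" where
  "comparability_graph V E \<longleftrightarrow> simple_graph V E \<and> (\<exists>R. transitive_orientation E R)"

definition subgraph :: "'v set \<Rightarrow> 'v set set \<Rightarrow> 'v set \<Rightarrow> 'v set set \<Rightarrow> bool" where
  "subgraph V' E' V E \<longleftrightarrow> simple_graph V' E' \<and> V' \<subseteq> V \<and> E' \<subseteq> E"

definition comparability_cover :: "'v set \<Rightarrow> 'v set set \<Rightarrow> nat \<Rightarrow> bool" where
  "comparability_cover V E m \<longleftrightarrow>
     (\<exists>Vs Es. (\<forall>i<m. subgraph (Vs i) (Es i) V E \<and> comparability_graph (Vs i) (Es i)) \<and>
        (\<forall>i<m. \<forall>j<m. i \<noteq> j \<longrightarrow> Es i \<inter> Es j = {}) \<and>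
        (\<Union>i<m. Es i) = E)"

definition p_number :: "'v set \<Rightarrow> 'v set set \<Rightarrow> nat" where
  "p_number V E = (LEAST m. comparability_cover V E m)"

end

theory Submission
  imports Defs
begin

definition shareE :: "'v set set \<Rightarrow> 'v set \<Rightarrow> 'v set set set" where
  "shareE E S = {{e, f} | e f. e \<in> E \<and> f \<in> E \<and> e \<noteq> f \<and> (\<exists>x\<in>S. x \<in> e \<and> x \<in> f)}"

lemma shareE_comp:
  assumes fin: "finite E"
    and uniq: "\<And>e x y. e \<in> E \<Longrightarrow> x \<in> e \<Longrightarrow> y \<in> e \<Longrightarrow> x \<in> S \<Longrightarrow> y \<in> S \<Longrightarrow> x = y"
  shows "comparability_graph E (shareE E S)"
proof -
  obtain h :: "'a set \<Rightarrow> nat" where h: "inj_on h E"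
    using fin finite_imp_inj_to_nat_seg by blast
  define R where "R = {(e, f). e \<in> E \<and> f \<in> E \<and> e \<noteq> f \<and> (\<exists>x\<in>S. x \<in> e \<and> x \<in> f) \<and> h e < h f}"
  have sg: "simple_graph E (shareE E S)"
    unfolding simple_graph_def shareE_def by blast
  have t1: "\<forall>u v. (u, v) \<in> R \<longrightarrow> {u, v} \<in> shareE E S"
    unfolding R_def shareE_def by blast
  have t2: "\<forall>u v. u \<noteq> v \<longrightarrow> {u, v} \<in> shareE E S \<longrightarrow> ((u, v) \<in> R \<longleftrightarrow> (v, u) \<notin> R)"
  proof (intro allI impI)
    fix u v assume uv: "u \<noteq> v" and m: "{u, v} \<in> shareE E S"
    then obtain e f where ef: "{u,v} = {e,f}" "e \<in> E" "f \<in> E" "e \<noteq> f" "\<exists>x\<in>S. x \<in> e \<and> x \<in> f"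
      unfolding shareE_def by blast
    hence props: "u \<in> E" "v \<in> E" "\<exists>x\<in>S. x \<in> u \<and> x \<in> v"
      by (auto simp: doubleton_eq_iff)
    have "h u \<noteq> h v" using h uv props inj_on_def by metis
    then show "(u, v) \<in> R \<longleftrightarrow> (v, u) \<notin> R"
      using props uv unfolding R_def by auto
  qed
  have t3: "trans R"
  proof (rule transI)
    fix a b c assume ab: "(a, b) \<in> R" and bc: "(b, c) \<in> R"
    from ab obtain x where x: "x \<in> S" "x \<in> a" "x \<in> b" unfolding R_def by blast
    from bc obtain y where y: "y \<in> S" "y \<in> b" "y \<in> c" unfolding R_def by blast
    have "b \<in> E" using ab R_def by blast
    hence "x = y" using uniq x y by blast
    moreover have "a \<noteq> c" using ab bc unfolding R_def by auto
    ultimately show "(a, c) \<in> R" using ab bc x y unfolding R_def by auto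
  qed
  show ?thesis unfolding comparability_graph_def transitive_orientation_def
    using sg t1 t2 t3 by blast
qed

lemma AB_fact:
  assumes "A \<inter> B = {}" "e = {a0, b0}" "a0 \<in> A" "b0 \<in> B"
  shows "x \<in> e \<Longrightarrow> x \<in> A \<Longrightarrow> x = a0" and "x \<in> e \<Longrightarrow> x \<in> B \<Longrightarrow> x = b0"
  using assms by auto

theorem theorem4:
  fixes V :: "'v set" and E :: "'v set set"
  assumes "finite_simple_graph V E"
    and "bipartite V E"
  shows "p_number E (line_graph_edges E) \<le> 2"
proof -
  have "\<exists>A B. A \<inter> B = {} \<and> A \<union> B = V \<and>
      (\<forall>e\<in>E. \<exists>a b. a \<in> A \<and> b \<in> B \<and> e = {a, b})" using assms(2) unfolding bipartite_def .
  then obtain A B where AB: "A \<inter> B = {}" "A \<union> B = V"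
    "\<forall>e\<in>E. \<exists>a b. a \<in> A \<and> b \<in> B \<and> e = {a, b}" by iprover
  have finV: "finite V" using assms(1) unfolding finite_simple_graph_def by simp
  have sg: "simple_graph V E" using assms(1) unfolding finite_simple_graph_def by simp
  have EV: "E \<subseteq> Pow V"
  proof
    fix e assume "e \<in> E"
    then obtain u v where "u \<in> V" "v \<in> V" "e = {u, v}" using sg unfolding simple_graph_def by metis
    then show "e \<in> Pow V" by simp
  qed
  have finE: "finite E" using finite_subset[OF EV] finV by simp
  have uA: "\<And>e x y. e \<in> E \<Longrightarrow> x \<in> e \<Longrightarrow> y \<in> e \<Longrightarrow> x \<in> A \<Longrightarrow> y \<in> A \<Longrightarrow> x = y"
  proof -
    fix e x y assume h: "e \<in> E" "x \<in> e" "y \<in> e" "x \<in> A" "y \<in> A"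
    then obtain a0 b0 where "a0 \<in> A" "b0 \<in> B" "e = {a0, b0}" using AB(3) by blast
    then show "x = y" using AB_fact(1)[OF AB(1)] h by metis
  qed
  have uB: "\<And>e x y. e \<in> E \<Longrightarrow> x \<in> e \<Longrightarrow> y \<in> e \<Longrightarrow> x \<in> B \<Longrightarrow> y \<in> B \<Longrightarrow> x = y"
  proof -
    fix e x y assume h: "e \<in> E" "x \<in> e" "y \<in> e" "x \<in> B" "y \<in> B"
    then obtain a0 b0 where "a0 \<in> A" "b0 \<in> B" "e = {a0, b0}" using AB(3) by blast
    then show "x = y" using AB_fact(2)[OF AB(1)] h by metis
  qed
  define Es where "Es = (\<lambda>i::nat. if i = 0 then shareE E A else shareE E B)"
  define Vs where "Vs = (\<lambda>i::nat. E)"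
  have c: "comparability_graph E (Es i)" for i
    unfolding Es_def using shareE_comp[OF finE uA] shareE_comp[OF finE uB] by simp
  have sub: "Es i \<subseteq> line_graph_edges E" for i
    unfolding Es_def shareE_def line_graph_edges_def by auto
  have subg: "subgraph (Vs i) (Es i) E (line_graph_edges E)" for i
    using c sub unfolding subgraph_def comparability_graph_def Vs_def by blast
  have disj: "shareE E A \<inter> shareE E B = {}"
  proof (rule ccontr)
    assume "shareE E A \<inter> shareE E B \<noteq> {}"
    then obtain X where XA: "X \<in> shareE E A" and XB: "X \<in> shareE E B" by blast
    from XA obtain e f a where 1: "X = {e,f}" "e \<in> E" "f \<in> E" "e \<noteq> f" "a \<in> A" "a \<in> e" "a \<in> f"
      unfolding shareE_def by blast
    from XB obtain b where b: "b \<in> B" "\<forall>Y\<in>X. b \<in> Y"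
      unfolding shareE_def by blast
    have be: "b \<in> e" "b \<in> f" using b 1 by auto
    have ef: "g = {a, b}" if "g \<in> E" "a \<in> g" "b \<in> g" for g
    proof -
      obtain a0 b0 where ab0: "a0 \<in> A" "b0 \<in> B" "g = {a0, b0}" using AB(3) \<open>g \<in> E\<close> by blast
      have "a = a0" using AB_fact(1)[OF AB(1) ab0(3,1,2)] that 1(5) by blast
      moreover have "b = b0" using AB_fact(2)[OF AB(1) ab0(3,1,2)] that b(1) by blast
      ultimately show ?thesis using ab0 by simp
    qed
    have "e = {a, b}" using ef 1 be by blast
    moreover have "f = {a, b}" using ef 1 be by blast
    ultimately show False using 1 by simp
  qed
  have un: "(\<Union>i<2. Es i) = line_graph_edges E"
  proof
    show "(\<Union>i<2. Es i) \<subseteq> line_graph_edges E" using sub by blast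
    show "line_graph_edges E \<subseteq> (\<Union>i<2. Es i)"
    proof
      fix X assume "X \<in> line_graph_edges E"
      then obtain e f x where 1: "X = {e,f}" "e \<in> E" "f \<in> E" "e \<noteq> f" "x \<in> e" "x \<in> f"
        unfolding line_graph_edges_def by blast
      have "x \<in> V" using EV 1 by blast
      hence "x \<in> A \<or> x \<in> B" using AB by blast
      have "X \<in> Es 0 \<or> X \<in> Es 1"
      proof (cases "x \<in> A")
        case True
        hence "X \<in> shareE E A" unfolding shareE_def using 1 by blast
        thus ?thesis unfolding Es_def by simp
      next
        case False
        hence "x \<in> B" using \<open>x \<in> A \<or> x \<in> B\<close> by blast
        hence "X \<in> shareE E B" unfolding shareE_def using 1 by blast
        thus ?thesis unfolding Es_def by simp
      qed
      moreover have "(0::nat) < 2" "(1::nat) < 2" by simp_all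
      ultimately show "X \<in> (\<Union>i<2. Es i)" by blast
    qed
  qed
  have "comparability_cover E (line_graph_edges E) 2"
    unfolding comparability_cover_def
  proof (intro exI conjI)
    show "\<forall>i<2. subgraph (Vs i) (Es i) E (line_graph_edges E) \<and> comparability_graph (Vs i) (Es i)"
      using subg c unfolding Vs_def by blast
    show "\<forall>i<2. \<forall>j<2. i \<noteq> j \<longrightarrow> Es i \<inter> Es j = {}"
    proof (intro allI impI)
      fix i j :: nat assume "i < 2" "j < 2" "i \<noteq> j"
      hence "(i = 0 \<and> j = 1) \<or> (i = 1 \<and> j = 0)" by linarith
      thus "Es i \<inter> Es j = {}" using disj unfolding Es_def by auto
    qed
    show "(\<Union>i<2. Es i) = line_graph_edges E" by (rule un)
  qed
  thus ?thesis unfolding p_number_def by (rule Least_le)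
qed

end
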